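(* Let $X,Y$ be real-valued random variables on a probability space, let $\mu$ be the law of $(X,Y)$ on $\mathbb{R}^2$, $\mu_X,\mu_Y$ the laws of $X,Y$, and $\mu_{XY}=\mu_X\times\mu_Y$. If $\mu\ll\mu_{XY}$ and $L=\frac{d\mu}{d\mu_{XY}}$ is a version of the Radon–Nikodym derivative, then \[\mu_{XY}(\{(x,y)\in\mathbb{R}^2: L(x,y)>1\})<1\quad\text{and}\quad \mu_{XY}(\{(x,y)\in\mathbb{R}^2: L(x,y)<1\})<1.\]
   Context: $\mu_{XY}$ is the unique probability measure on the Borel sets of $\mathbb{R}^2$ with $\mu_{XY}(A\times B)=\mu_X(A)\mu_Y(B)$. *)

theory Defs
  imports "HOL-Probability.Probability"
begin

end

theory Submission
  imports Defs
begin

lemma key: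
  fixes N :: "'b measure" and L :: "'b \<Rightarrow> ennreal"
  assumes P: "prob_space N" and Lm: "L \<in> borel_measurable N"
    and I: "(\<integral>\<^sup>+ z. L z \<partial>N) = 1"
  shows "measure N {z \<in> space N. L z > 1} < 1 \<and> measure N {z \<in> space N. L z < 1} < 1"
proof -
  interpret prob_space N by (rule P)
  have ne: "\<not> (AE z in N. False)" using AE_False by simp
  have A: "measure N {z \<in> space N. L z > 1} \<noteq> 1"
  proof
    assume h: "measure N {z \<in> space N. L z > 1} = 1"
    have ev: "{z \<in> space N. L z > 1} \<in> events" using Lm by measurable
    have ae: "AE z in N. L z > 1"
      using AE_in_set_eq_1[OF ev] h by auto
    have "(\<integral>\<^sup>+ z. L z \<partial>N) = (\<integral>\<^sup>+ z. 1 + (L z - 1) \<partial>N)"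
    proof (rule nn_integral_cong_AE)
      show "AE z in N. L z = 1 + (L z - 1)"
        using ae
      proof eventually_elim
        case (elim z)
        show ?case by (rule add_diff_inverse_ennreal[symmetric]) (rule less_imp_le[OF elim])
      qed
    qed
    also have "\<dots> = (\<integral>\<^sup>+ z. 1 \<partial>N) + (\<integral>\<^sup>+ z. (L z - 1) \<partial>N)"
      by (rule nn_integral_add) (use Lm in auto)
    finally have "1 + (\<integral>\<^sup>+ z. (L z - 1) \<partial>N) = 1" using I by (simp add: emeasure_space_1)
    hence "1 + (\<integral>\<^sup>+ z. (L z - 1) \<partial>N) = 1 + 0" by simp
    hence "(\<integral>\<^sup>+ z. (L z - 1) \<partial>N) = 0"
      unfolding ennreal_add_left_cancel by simp
    hence "AE z in N. L z - 1 = 0" using nn_integral_0_iff_AE Lm by (simp add: nn_integral_0_iff_AE)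
    with ae have "AE z in N. False"
      by eventually_elim (metis diff_gr0_ennreal less_irrefl)
    with ne show False by simp
  qed
  have B: "measure N {z \<in> space N. L z < 1} \<noteq> 1"
  proof
    assume h: "measure N {z \<in> space N. L z < 1} = 1"
    have ev: "{z \<in> space N. L z < 1} \<in> events" using Lm by measurable
    have ae: "AE z in N. L z < 1"
      using AE_in_set_eq_1[OF ev] h by auto
    have "(\<integral>\<^sup>+ z. 1 \<partial>N) = (\<integral>\<^sup>+ z. L z + (1 - L z) \<partial>N)"
      by (rule nn_integral_cong_AE) (use ae in \<open>auto elim!: eventually_mono\<close>)
    also have "\<dots> = (\<integral>\<^sup>+ z. L z \<partial>N) + (\<integral>\<^sup>+ z. (1 - L z) \<partial>N)"
      by (rule nn_integral_add) (use Lm in auto)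
    finally have "1 + (\<integral>\<^sup>+ z. (1 - L z) \<partial>N) = 1" using I by (simp add: emeasure_space_1)
    hence "1 + (\<integral>\<^sup>+ z. (1 - L z) \<partial>N) = 1 + 0" by simp
    hence "(\<integral>\<^sup>+ z. (1 - L z) \<partial>N) = 0"
      unfolding ennreal_add_left_cancel by simp
    hence "AE z in N. 1 - L z = 0" using nn_integral_0_iff_AE Lm by (simp add: nn_integral_0_iff_AE)
    with ae have "AE z in N. False"
      by eventually_elim (metis diff_gr0_ennreal less_irrefl)
    with ne show False by simp
  qed
  have "measure N {z \<in> space N. L z > 1} \<le> 1" "measure N {z \<in> space N. L z < 1} \<le> 1"
    by (auto intro: prob_le_1)
  with A B show ?thesis by linarith
qed

theorem proposition3:
  fixes M :: "'a measure" and X Y :: "'a \<Rightarrow> real"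
    and L :: "real \<times> real \<Rightarrow> ennreal"
  assumes "prob_space M"
    and "X \<in> borel_measurable M" and "Y \<in> borel_measurable M"
    and "absolutely_continuous (distr M borel X \<Otimes>\<^sub>M distr M borel Y)
           (distr M (borel \<Otimes>\<^sub>M borel) (\<lambda>\<omega>. (X \<omega>, Y \<omega>)))"
    and "L \<in> borel_measurable (distr M borel X \<Otimes>\<^sub>M distr M borel Y)"
    and "density (distr M borel X \<Otimes>\<^sub>M distr M borel Y) L
           = distr M (borel \<Otimes>\<^sub>M borel) (\<lambda>\<omega>. (X \<omega>, Y \<omega>))"
  shows "measure (distr M borel X \<Otimes>\<^sub>M distr M borel Y) {z. L z > 1} < 1
         \<and> measure (distr M borel X \<Otimes>\<^sub>M distr M borel Y) {z. L z < 1} < 1"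
proof -
  let ?N = "distr M borel X \<Otimes>\<^sub>M distr M borel Y"
  interpret pM: prob_space M by fact
  have PX: "prob_space (distr M borel X)" by (rule pM.prob_space_distr) fact
  have PY: "prob_space (distr M borel Y)" by (rule pM.prob_space_distr) fact
  have PN: "prob_space ?N"
    by (rule prob_space_pair) (use PX PY in \<open>auto simp: pair_prob_space_def pair_sigma_finite_def prob_space_imp_sigma_finite\<close>)
  have sp: "space ?N = UNIV" by (simp add: space_pair_measure)
  have meas: "(\<lambda>\<omega>. (X \<omega>, Y \<omega>)) \<in> measurable M (borel \<Otimes>\<^sub>M borel)"
    using assms(2,3) by measurable
  have "emeasure (density ?N L) (space ?N) = (\<integral>\<^sup>+ z. L z * indicator (space ?N) z \<partial>?N)"
    by (rule emeasure_density[OF assms(5) sets.top])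
  also have "\<dots> = (\<integral>\<^sup>+ z. L z \<partial>?N)"
    by (rule nn_integral_cong) simp
  finally have E: "emeasure (density ?N L) (space ?N) = (\<integral>\<^sup>+ z. L z \<partial>?N)" .
  moreover have "emeasure (density ?N L) (space ?N) = 1"
  proof -
    have "emeasure (distr M (borel \<Otimes>\<^sub>M borel) (\<lambda>\<omega>. (X \<omega>, Y \<omega>))) (space ?N)
        = emeasure M ((\<lambda>\<omega>. (X \<omega>, Y \<omega>)) -` (space ?N) \<inter> space M)"
      by (rule emeasure_distr[OF meas]) (use sets.top[of "borel \<Otimes>\<^sub>M borel"] in \<open>simp add: space_pair_measure\<close>)
    also have "\<dots> = emeasure M (space M)" by (simp add: sp)
    finally show ?thesis using assms(6) pM.emeasure_space_1 by simp
  qed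
  ultimately have I: "(\<integral>\<^sup>+ z. L z \<partial>?N) = 1" by simp
  from key[OF PN assms(5) I] show ?thesis by (simp add: sp)
qed

end
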